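(* Let $m,n$ be positive integers and let $X$ have Snedecor's $F$-distribution with $m$ and $n$ degrees of freedom, i.e. density $f(x)=\frac{\Gamma(\frac{n+m}2)(\frac mn)^{m/2}x^{(m-2)/2}}{\Gamma(\frac m2)\Gamma(\frac n2)(1+\frac mnx)^{(n+m)/2}}$ for $0<x<\infty$. Then $$\Pr\{X\ge x\}\le x^{m/2}\Big(\frac{n+m}{n+mx}\Big)^{(m+n)/2}\quad\text{for } x\ge1,\qquad \Pr\{X\le x\}\le x^{m/2}\Big(\frac{n+m}{n+mx}\Big)^{(m+n)/2}\quad\text{for } 0<x\le1,$$ and the function $x\mapsto x^{m/2}\big(\frac{n+m}{n+mx}\big)^{(m+n)/2}$ is monotonically increasing on $(0,1)$ and monotonically decreasing on $(1,\infty)$. *)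

theory Defs
  imports "HOL-Probability.Probability"
begin

definition F_density :: "nat \<Rightarrow> nat \<Rightarrow> real \<Rightarrow> real" where
  "F_density m n x =
     (if 0 < x then
        Gamma ((real n + real m) / 2) * (real m / real n) powr (real m / 2)
          * x powr ((real m - 2) / 2)
        / (Gamma (real m / 2) * Gamma (real n / 2)
           * (1 + real m / real n * x) powr ((real n + real m) / 2))
      else 0)"

definition F_bound :: "nat \<Rightarrow> nat \<Rightarrow> real \<Rightarrow> real" where
  "F_bound m n x = x powr (real m / 2)
     * ((real n + real m) / (real n + real m * x)) powr ((real m + real n) / 2)"

end

theory Submission imports Defs begin

definition LF :: "nat \<Rightarrow> nat \<Rightarrow> real \<Rightarrow> real" where
  "LF m n x = real m / 2 * ln x + (real m + real n) / 2 * (ln (real n + real m) - ln (real n + real m * x))"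

lemma F_bound_exp:
  assumes "0 < m" "0 < n" "0 < x"
  shows "F_bound m n x = exp (LF m n x)"
proof -
  have p1: "0 < real n + real m * x" using assms by (simp add: add_pos_nonneg)
  have p2: "0 < (real n + real m) / (real n + real m * x)" using assms p1 by simp
  show ?thesis unfolding F_bound_def LF_def
    using assms p1 p2
    by (simp add: powr_def exp_add ln_div)
qed

lemma LF_deriv:
  assumes "0 < m" "0 < n" "0 < x"
  shows "DERIV (LF m n) x :> real m * real n * (1 - x) / (2 * x * (real n + real m * x))"
proof -
  have p1: "0 < real n + real m * x" using assms by (simp add: add_pos_nonneg)
  have d1: "DERIV ln x :> 1/x" by (rule DERIV_ln_divide[OF assms(3)])
  have d0: "DERIV (\<lambda>x. real n + real m * x) x :> 0 + real m * 1"
    by (intro DERIV_add DERIV_const DERIV_cmult DERIV_ident)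
  have d2: "DERIV (\<lambda>x. ln (real n + real m * x)) x :> 1 / (real n + real m * x) * (0 + real m * 1)"
    by (rule DERIV_chain2[OF DERIV_ln_divide[OF p1] d0])
  have "DERIV (\<lambda>x. real m / 2 * ln x + (real m + real n) / 2 * (ln (real n + real m) - ln (real n + real m * x))) x
      :> real m / 2 * (1/x) + (real m + real n) / 2 * (0 - 1 / (real n + real m * x) * (0 + real m * 1))"
    by (intro DERIV_add DERIV_cmult DERIV_diff DERIV_const d1 d2)
  then have "DERIV (LF m n) x :> real m / 2 * (1/x) + (real m + real n) / 2 * (0 - real m / (real n + real m * x))"
    unfolding LF_def[abs_def] by simp
  moreover have "real m / 2 * (1/x) + (real m + real n) / 2 * (0 - real m / (real n + real m * x))
     = real m * real n * (1 - x) / (2 * x * (real n + real m * x))"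
  proof -
    have q: "0 < x * (real n + real m * x)" using p1 assms by auto
    have "real m / 2 * (1/x) + (real m + real n) / 2 * (0 - real m / (real n + real m * x))
        = (real m * (real n + real m * x) - (real m + real n) * real m * x) / (2 * (x * (real n + real m * x)))"
      using p1 assms by (simp add: add_divide_distrib diff_divide_distrib) (simp add: divide_simps)
    also have "\<dots> = real m * real n * (1 - x) / (2 * x * (real n + real m * x))"
      by (simp add: algebra_simps)
    finally show ?thesis .
  qed
  ultimately show ?thesis by simp
qed

lemma LF_cont:
  assumes "0 < m" "0 < n" "0 < a"
  shows "continuous_on {a..b} (LF m n)"
  unfolding LF_def
  using assms apply (auto intro!: continuous_intros)
  subgoal for x using mult_pos_pos[of "real m" x] of_nat_0_less_iff[of m] of_nat_0_less_iff[of n] by linarith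
  done

lemma F_bound_mono: assumes "0 < m" "0 < n" shows "mono_on {0<..<1} (F_bound m n)"
proof (rule mono_onI)
  fix r s :: real assume rs: "r \<in> {0<..<1}" "s \<in> {0<..<1}" "r \<le> s"
  have "LF m n r \<le> LF m n s"
  proof (rule DERIV_nonneg_imp_increasing_open[OF rs(3)])
    fix x assume "r < x" "x < s"
    then have x: "0 < x" "x < 1" using rs by auto
    have "0 < real n + real m * x" using assms x by (simp add: add_pos_nonneg)
    then show "\<exists>y. DERIV (LF m n) x :> y \<and> y \<ge> 0"
      using LF_deriv[OF assms x(1)] x by (intro exI[of _ "real m * real n * (1 - x) / (2 * x * (real n + real m * x))"] conjI) auto
  qed (use LF_cont assms rs in auto)
  then show "F_bound m n r \<le> F_bound m n s"
    using F_bound_exp[OF assms] rs by simp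
qed

lemma F_bound_antimono: assumes "0 < m" "0 < n" shows "antimono_on {1<..} (F_bound m n)"
  unfolding monotone_on_def
proof (intro ballI impI)
  fix r s :: real assume rs: "r \<in> {1<..}" "s \<in> {1<..}" "r \<le> s"
  have "LF m n s \<le> LF m n r"
  proof (rule DERIV_nonpos_imp_decreasing_open[OF rs(3)])
    fix x assume "r < x" "x < s"
    then have x: "0 < x" "1 < x" using rs by auto
    have "0 < real n + real m * x" using assms x by (simp add: add_pos_nonneg)
    then show "\<exists>y. DERIV (LF m n) x :> y \<and> y \<le> 0"
      using LF_deriv[OF assms x(1)] x by (intro exI[of _ "real m * real n * (1 - x) / (2 * x * (real n + real m * x))"] conjI)
        (auto intro!: divide_nonpos_pos mult_nonneg_nonpos)
  qed (use LF_cont assms rs in auto)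
  then show "F_bound m n s \<le> F_bound m n r"
    using F_bound_exp[OF assms] rs by simp
qed

lemma key_poly:
  fixes m n x t :: real
  assumes "0 < m" "0 < n" "0 < x" "0 < t" "0 \<le> (x - 1) * (t - x)"
  shows "(1 + m / n * (t / x)) * (n + m * x) \<le> (n + m) * (1 + m / n * t)"
proof -
  have e1: "(1 + m / n * (t / x)) * (n + m * x) = (n*x + m*t) * (n + m*x) / (n*x)"
    using assms by (simp add: field_simps)
  have e2: "(n + m) * (1 + m / n * t) = (n + m) * (n + m*t) * x / (n*x)"
    using assms by (simp add: field_simps)
  have d: "(n + m) * (n + m*t) * x - (n*x + m*t) * (n + m*x) = m * n * ((x - 1) * (t - x))"
    by (simp add: algebra_simps)
  have "0 \<le> m * n * ((x - 1) * (t - x))" using assms by simp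
  then have "(n*x + m*t) * (n + m*x) \<le> (n + m) * (n + m*t) * x" using d by linarith
  then have "(n*x + m*t) * (n + m*x) / (n*x) \<le> (n + m) * (n + m*t) * x / (n*x)"
    using assms by (intro divide_right_mono) auto
  then show ?thesis using e1 e2 by simp
qed

definition hF :: "nat \<Rightarrow> nat \<Rightarrow> real \<Rightarrow> real" where
  "hF m n u = u powr ((real m - 2) / 2) / (1 + real m / real n * u) powr ((real n + real m) / 2)"

lemma hF_ineq:
  assumes "0 < m" "0 < n" "0 < x" "0 < t" "0 \<le> (x - 1) * (t - x)"
  shows "hF m n t \<le> F_bound m n x * (hF m n (t / x) / x)"
proof -
  define p where "p = (real n + real m) / 2"
  define q where "q = (real m - 2) / 2"
  have p: "0 < p" using assms by (simp add: p_def)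
  have a1: "0 < 1 + real m / real n * t" using assms by (simp add: add_pos_nonneg)
  have a2: "0 < 1 + real m / real n * (t / x)" using assms by (simp add: add_pos_nonneg)
  have a3: "0 < real n + real m * x" using assms by (simp add: add_pos_nonneg)
  have a4: "0 < real n + real m" using assms by simp
  have hpos: "0 < hF m n t" using assms a1 by (simp add: hF_def)
  have hpos2: "0 < hF m n (t/x)" using assms a2 by (simp add: hF_def)
  have Bpos: "0 < F_bound m n x" using assms a3 a4 by (simp add: F_bound_def)
  have l1: "ln (hF m n t) = q * ln t - p * ln (1 + real m / real n * t)"
    using assms a1 by (simp add: hF_def ln_div ln_powr p_def q_def)
  have l2: "ln (hF m n (t/x)) = q * (ln t - ln x) - p * ln (1 + real m / real n * (t/x))"
    using assms a2 by (simp add: hF_def ln_div ln_powr p_def q_def)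
  have l3: "ln (F_bound m n x) = real m / 2 * ln x + p * (ln (real n + real m) - ln (real n + real m * x))"
    using assms a3 a4 by (simp add: F_bound_def ln_mult ln_div ln_powr p_def add.commute)
  have l4: "ln (F_bound m n x * (hF m n (t / x) / x)) = ln (F_bound m n x) + ln (hF m n (t/x)) - ln x"
    using Bpos hpos2 assms by (simp add: ln_mult ln_div)
  have k: "ln (1 + real m / real n * (t / x)) + ln (real n + real m * x)
      \<le> ln (real n + real m) + ln (1 + real m / real n * t)"
  proof -
    have "ln ((1 + real m / real n * (t / x)) * (real n + real m * x))
       \<le> ln ((real n + real m) * (1 + real m / real n * t))"
      using key_poly[of "real m" "real n" x t] assms a1 a2 a3 a4 by simp
    then show ?thesis using a1 a2 a3 a4 by (simp add: ln_mult)
  qed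
  have "ln (hF m n t) \<le> ln (F_bound m n x * (hF m n (t / x) / x))"
  proof -
    have "p * (ln (1 + real m / real n * (t / x)) + ln (real n + real m * x))
      \<le> p * (ln (real n + real m) + ln (1 + real m / real n * t))"
      using k p by (intro mult_left_mono) auto
    moreover have qe: "q = real m / 2 - 1" by (simp add: q_def field_simps)
    ultimately show ?thesis unfolding l4 l1 l2 l3 qe by (auto simp: algebra_simps diff_divide_distrib)
  qed
  then show ?thesis using hpos Bpos hpos2 assms by simp
qed

lemma F_pointwise:
  assumes "0 < m" "0 < n" "0 < x" "0 < t" "0 \<le> (x - 1) * (t - x)"
  shows "F_density m n t \<le> F_bound m n x * (F_density m n (t / x) / x)"
proof -
  define K where "K = Gamma ((real n + real m) / 2) * (real m / real n) powr (real m / 2)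
        / (Gamma (real m / 2) * Gamma (real n / 2))"
  have K: "0 \<le> K" using assms by (simp add: K_def Gamma_real_pos less_imp_le)
  have e: "\<And>u. 0 < u \<Longrightarrow> F_density m n u = K * hF m n u"
    by (simp add: F_density_def K_def hF_def)
  have "K * hF m n t \<le> K * (F_bound m n x * (hF m n (t / x) / x))"
    using hF_ineq[OF assms] K by (rule mult_left_mono)
  then show ?thesis using e[of t] e[of "t/x"] assms by (simp add: algebra_simps)
qed

lemma F_density_nonneg: "0 < m \<Longrightarrow> 0 < n \<Longrightarrow> 0 \<le> F_density m n t"
  by (simp add: F_density_def Gamma_real_pos less_imp_le)

lemma F_bound_nonneg: "0 \<le> F_bound m n x"
  by (simp add: F_bound_def)

lemma tail_bound:
  fixes M :: "'a measure" and X :: "'a \<Rightarrow> real" and m n :: nat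
  assumes P: "prob_space M"
    and mn: "0 < m" "0 < n"
    and D: "distributed M lborel X (\<lambda>x. ennreal (F_density m n x))"
    and x: "0 < x" and A: "A \<in> sets borel"
    and cond: "\<And>t. t \<in> A \<Longrightarrow> 0 < t \<Longrightarrow> 0 \<le> (x - 1) * (t - x)"
  shows "measure M (X -` A \<inter> space M) \<le> F_bound m n x"
proof -
  interpret prob_space M by (rule P)
  have gm[measurable]: "(\<lambda>t. ennreal (F_density m n t)) \<in> borel_measurable borel"
    using distributed_borel_measurable[OF D] by simp
  have tot: "(\<integral>\<^sup>+t. ennreal (F_density m n t) \<partial>lborel) = 1"
  proof -
    have "emeasure M (X -` UNIV \<inter> space M) = (\<integral>\<^sup>+t. ennreal (F_density m n t) * indicator UNIV t \<partial>lborel)"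
      by (rule distributed_emeasure[OF D]) simp
    then show ?thesis by (simp add: emeasure_space_1)
  qed
  have sub: "(\<integral>\<^sup>+t. ennreal (F_density m n (t / x)) * ennreal (1 / x) \<partial>lborel) = 1"
  proof -
    have "(\<integral>\<^sup>+t. ennreal (F_density m n t) \<partial>lborel)
        = ennreal \<bar>1 / x\<bar> * (\<integral>\<^sup>+t. ennreal (F_density m n (0 + 1 / x * t)) \<partial>lborel)"
      by (rule nn_integral_real_affine[OF gm]) (use x in simp)
    also have "\<dots> = (\<integral>\<^sup>+t. ennreal (F_density m n (t / x)) * ennreal (1 / x) \<partial>lborel)"
      using x by (subst nn_integral_multc) (auto simp: mult.commute)
    finally show ?thesis using tot by simp
  qed
  have "emeasure M (X -` A \<inter> space M) = (\<integral>\<^sup>+t. ennreal (F_density m n t) * indicator A t \<partial>lborel)"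
    using A by (intro distributed_emeasure[OF D]) simp
  also have "\<dots> \<le> (\<integral>\<^sup>+t. ennreal (F_bound m n x) * (ennreal (F_density m n (t / x)) * ennreal (1 / x)) \<partial>lborel)"
  proof (rule nn_integral_mono)
    fix t :: real
    show "ennreal (F_density m n t) * indicator A t
        \<le> ennreal (F_bound m n x) * (ennreal (F_density m n (t / x)) * ennreal (1 / x))"
    proof (cases "t \<in> A \<and> 0 < t")
      case True
      have "F_density m n t \<le> F_bound m n x * (F_density m n (t / x) * (1 / x))"
        using F_pointwise[OF mn x _ cond] True by simp
      then have "ennreal (F_density m n t) \<le> ennreal (F_bound m n x * (F_density m n (t / x) * (1 / x)))"
        by (rule ennreal_leI)
      also have "\<dots> = ennreal (F_bound m n x) * (ennreal (F_density m n (t / x)) * ennreal (1 / x))"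
      proof -
        have a: "0 \<le> F_bound m n x" "0 \<le> F_density m n (t / x)" "0 \<le> 1 / x"
          using x F_bound_nonneg F_density_nonneg[OF mn] by auto
        show ?thesis using ennreal_mult[OF a(1) mult_nonneg_nonneg[OF a(2,3)]] ennreal_mult[OF a(2,3)]
          by simp
      qed
      finally show ?thesis using True by simp
    next
      case False
      then show ?thesis by (auto simp: F_density_def indicator_def)
    qed
  qed
  also have "\<dots> = ennreal (F_bound m n x)"
    using sub by (subst nn_integral_cmult) auto
  finally show ?thesis
    by (simp add: emeasure_eq_measure ennreal_le_iff F_bound_nonneg)
qed

theorem corollary10:
  fixes M :: "'a measure" and X :: "'a \<Rightarrow> real" and m n :: nat
  assumes "prob_space M"
    and "0 < m" and "0 < n"
    and "distributed M lborel X (\<lambda>x. ennreal (F_density m n x))"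
  shows "(\<forall>x\<ge>1. measure M {\<omega> \<in> space M. X \<omega> \<ge> x} \<le> F_bound m n x)
    \<and> (\<forall>x. 0 < x \<and> x \<le> 1 \<longrightarrow> measure M {\<omega> \<in> space M. X \<omega> \<le> x} \<le> F_bound m n x)
    \<and> mono_on {0<..<1} (F_bound m n)
    \<and> antimono_on {1<..} (F_bound m n)"
proof -
  have up: "\<forall>x\<ge>1. measure M {\<omega> \<in> space M. X \<omega> \<ge> x} \<le> F_bound m n x"
  proof (intro allI impI)
    fix x :: real assume "1 \<le> x"
    have "measure M (X -` {x..} \<inter> space M) \<le> F_bound m n x"
      using \<open>1 \<le> x\<close> by (intro tail_bound[OF assms]) auto
    moreover have "X -` {x..} \<inter> space M = {\<omega> \<in> space M. X \<omega> \<ge> x}" by auto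
    ultimately show "measure M {\<omega> \<in> space M. X \<omega> \<ge> x} \<le> F_bound m n x" by simp
  qed
  have lo: "\<forall>x. 0 < x \<and> x \<le> 1 \<longrightarrow> measure M {\<omega> \<in> space M. X \<omega> \<le> x} \<le> F_bound m n x"
  proof (intro allI impI)
    fix x :: real assume xx: "0 < x \<and> x \<le> 1"
    have "measure M (X -` {..x} \<inter> space M) \<le> F_bound m n x"
    proof (intro tail_bound[OF assms])
      fix t assume "t \<in> {..x}"
      then show "0 \<le> (x - 1) * (t - x)" using xx by (intro mult_nonpos_nonpos) auto
    qed (use xx in auto)
    moreover have "X -` {..x} \<inter> space M = {\<omega> \<in> space M. X \<omega> \<le> x}" by auto
    ultimately show "measure M {\<omega> \<in> space M. X \<omega> \<le> x} \<le> F_bound m n x" by simp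
  qed
  show ?thesis using up lo F_bound_mono[OF assms(2,3)] F_bound_antimono[OF assms(2,3)] by blast
qed

end
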